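(* Let $m\ge0$ be an integer. Let $\psi\in C^\infty\big(\mathbb{R}^n\times(\mathbb{R}^n\setminus\{0\})\big)$ be positively homogeneous of degree $m-1$ in $\xi$ and satisfy $\psi(x+\tau\xi,\xi)=\psi(x,\xi)$ for all $\tau\in\mathbb{R}$. Let $\varphi$ be its restriction to $T\mathbb{S}^{n-1}$. Then for all indices $1\le i_1,j_1,\dots,i_{m+1},j_{m+1}\le n$, $$(J_{i_1j_1}\cdots J_{i_{m+1}j_{m+1}}\psi)|_{T\mathbb{S}^{n-1}}=D_1D_2\cdots D_{m+1}\varphi,$$ where $$D_l=\mathcal{J}_{i_lj_l}-(l-1)\big(\xi_{i_l}X_{j_l}-\xi_{j_l}X_{i_l}\big),$$ and the composition is taken with $D_1$ leftmost.
   Context: $T\mathbb{S}^{n-1}=\{(x,\xi):|\xi|=1,\ \langle x,\xi\rangle=0\}$. Positive homogeneity of degree $\lambda$ in $\xi$ means $\psi(x,c\xi)=c^\lambda\psi(x,\xi)$ for $c>0$. The John operators are $J_{ij}=\partial^2/\partial x^i\partial\xi^j-\partial^2/\partial x^j\partial\xi^i$. Define vector fields on $\mathbb{R}^n\times\mathbb{R}^n$ (summation over $p$) $$\tilde X_i=\partial/\partial x^i-\xi_i\xi^p\,\partial/\partial x^p,\qquad \tilde\Xi_i=\partial/\partial\xi^i-x_i\xi^p\,\partial/\partial x^p-\xi_i\xi^p\,\partial/\partial\xi^p.$$ These are tangent to $T\mathbb{S}^{n-1}$; $X_i,\Xi_i$ are their restrictions, and $\mathcal{J}_{ij}=X_i\Xi_j-X_j\Xi_i$.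 Here $\xi_i=\xi^i$ acts by multiplication. *)

theory Defs
  imports "HOL-Analysis.Analysis"
begin

type_synonym 'n phase = "(real^'n) \<times> (real^'n)"

fun Ck_on :: "nat \<Rightarrow> 'a::euclidean_space set \<Rightarrow> ('a \<Rightarrow> real) \<Rightarrow> bool" where
  "Ck_on 0 U f = continuous_on U f"
| "Ck_on (Suc k) U f = (f differentiable_on U \<and>
     (\<forall>b\<in>Basis. Ck_on k U (\<lambda>p. frechet_derivative f (at p) b)))"

definition smooth_on :: "'a::euclidean_space set \<Rightarrow> ('a \<Rightarrow> real) \<Rightarrow> bool" where
  "smooth_on U f = (\<forall>k. Ck_on k U f)"

definition dx :: "'n::finite \<Rightarrow> ('n phase \<Rightarrow> real) \<Rightarrow> 'n phase \<Rightarrow> real" where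
  "dx i f p = frechet_derivative f (at p) (axis i 1, 0)"

definition dxi :: "'n::finite \<Rightarrow> ('n phase \<Rightarrow> real) \<Rightarrow> 'n phase \<Rightarrow> real" where
  "dxi i f p = frechet_derivative f (at p) (0, axis i 1)"

definition John :: "'n::finite \<Rightarrow> 'n \<Rightarrow> ('n phase \<Rightarrow> real) \<Rightarrow> 'n phase \<Rightarrow> real" where
  "John i j f p = dx i (dxi j f) p - dx j (dxi i f) p"

definition TS :: "'n::finite phase set" where
  "TS = {(x, \<xi>). norm \<xi> = 1 \<and> x \<bullet> \<xi> = 0}"

definition tX :: "'n::finite \<Rightarrow> ('n phase \<Rightarrow> real) \<Rightarrow> 'n phase \<Rightarrow> real" where
  "tX i f p = dx i f p - snd p $ i * (\<Sum>k\<in>UNIV. snd p $ k * dx k f p)"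

definition tXi :: "'n::finite \<Rightarrow> ('n phase \<Rightarrow> real) \<Rightarrow> 'n phase \<Rightarrow> real" where
  "tXi i f p = dxi i f p - fst p $ i * (\<Sum>k\<in>UNIV. snd p $ k * dx k f p)
                         - snd p $ i * (\<Sum>k\<in>UNIV. snd p $ k * dxi k f p)"

text \<open>Functions on T S^{n-1} are represented by functions on R^n x R^n of which only the
 values on TS matter.  To apply the restricted fields X_i, Xi_i we extend such a function
 smoothly off TS by composing with the smooth retraction
 (x,xi) |-> (x - (x.xi/|xi|^2) xi, xi/|xi|) onto TS (defined for xi /= 0).
 Since the tilde fields are tangent to TS, the result on TS does not depend on the extension.\<close>
definition ext :: "('n::finite phase \<Rightarrow> real) \<Rightarrow> 'n phase \<Rightarrow> real" where
  "ext g p = g (fst p - ((fst p \<bullet> snd p) / (snd p \<bullet> snd p)) *\<^sub>R snd p,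
                (1 / norm (snd p)) *\<^sub>R snd p)"

definition rX :: "'n::finite \<Rightarrow> ('n phase \<Rightarrow> real) \<Rightarrow> 'n phase \<Rightarrow> real" where
  "rX i g = tX i (ext g)"

definition rXi :: "'n::finite \<Rightarrow> ('n phase \<Rightarrow> real) \<Rightarrow> 'n phase \<Rightarrow> real" where
  "rXi i g = tXi i (ext g)"

definition rJohn :: "'n::finite \<Rightarrow> 'n \<Rightarrow> ('n phase \<Rightarrow> real) \<Rightarrow> 'n phase \<Rightarrow> real" where
  "rJohn i j g p = rX i (rXi j g) p - rX j (rXi i g) p"

definition Dop :: "(nat \<Rightarrow> 'n::finite) \<Rightarrow> (nat \<Rightarrow> 'n) \<Rightarrow> nat \<Rightarrow> ('n phase \<Rightarrow> real) \<Rightarrow> 'n phase \<Rightarrow> real" where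
  "Dop I J l g p = rJohn (I l) (J l) g p
     - (real l - 1) * (snd p $ (I l) * rX (J l) g p - snd p $ (J l) * rX (I l) g p)"

end

theory Submission
  imports Defs
begin


abbreviation Om :: "'n::finite phase set" where
  "Om \<equiv> UNIV \<times> (UNIV - {0})"

lemma open_Om: "open (Om :: 'n::finite phase set)"
  by (intro open_Times) auto

lemma fd_local:
  assumes "open U" "q \<in> U" "\<And>y. y \<in> U \<Longrightarrow> F y = G y"
  shows "frechet_derivative F (at q) = frechet_derivative G (at q)"
proof -
  have "(\<lambda>D. (F has_derivative D) (at q)) = (\<lambda>D. (G has_derivative D) (at q))"
    using has_derivative_transform_within_open[OF _ assms(1,2), of F _ "UNIV" G]
      has_derivative_transform_within_open[OF _ assms(1,2), of G _ "UNIV" F] assms(3)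
    by (auto intro!: ext)
  then show ?thesis unfolding frechet_derivative_def by simp
qed

lemma line_deriv:
  fixes F :: "'a::real_normed_vector \<Rightarrow> real"
  assumes "(F has_derivative D) (at (a + t *\<^sub>R w))"
  shows "((\<lambda>s. F (a + s *\<^sub>R w)) has_real_derivative D w) (at t)"
proof -
  have l: "linear D" using assms has_derivative_linear by blast
  have "((\<lambda>s. a + s *\<^sub>R w) has_derivative (\<lambda>s. s *\<^sub>R w)) (at t)"
    by (auto intro!: derivative_eq_intros)
  from has_derivative_compose[OF this assms]
  have "((\<lambda>s. F (a + s *\<^sub>R w)) has_derivative (\<lambda>s. D (s *\<^sub>R w))) (at t)" .
  moreover have "(\<lambda>s. D (s *\<^sub>R w)) = (*) (D w)"
    using linear_scale[OF l] by (auto simp: mult.commute)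
  ultimately show ?thesis unfolding has_field_derivative_def by simp
qed

lemma line_eq:
  fixes F :: "'a::real_normed_vector \<Rightarrow> real"
  assumes "(F has_derivative D) (at q)" "d > 0"
    and "\<And>t. \<bar>t\<bar> < d \<Longrightarrow> F (q + t *\<^sub>R v) = F q + t * c"
  shows "D v = c"
proof -
  have 1: "((\<lambda>s. F (q + s *\<^sub>R v)) has_real_derivative D v) (at 0)"
    using line_deriv[of F D q 0 v] assms(1) by simp
  have 2: "((\<lambda>s. F q + s * c) has_real_derivative D v) (at 0)"
    by (rule has_field_derivative_transform_within_open[OF 1, of "ball 0 d"])
       (use assms in \<open>auto simp: dist_norm\<close>)
  have 3: "((\<lambda>s. F q + s * c) has_real_derivative c) (at 0)"
    by (auto intro!: derivative_eq_intros)
  show ?thesis using DERIV_unique[OF 2 3] .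
qed

lemma line_eq2:
  fixes F :: "'a::real_normed_vector \<Rightarrow> real"
  assumes "(F has_derivative D) (at q)" "(G has_derivative E) (at q)"
    and "\<And>t. F (q + t *\<^sub>R v) = G (q + t *\<^sub>R v)"
  shows "D v = E v"
proof -
  have 1: "((\<lambda>s. F (q + s *\<^sub>R v)) has_real_derivative D v) (at 0)"
    using line_deriv[of F D q 0 v] assms(1) by simp
  have 2: "((\<lambda>s. G (q + s *\<^sub>R v)) has_real_derivative E v) (at 0)"
    using line_deriv[of G E q 0 v] assms(2) by simp
  show ?thesis using DERIV_unique[OF 1] 2 assms(3) by simp
qed

lemma sum_dx:
  fixes F :: "'n::finite phase \<Rightarrow> real"
  assumes "(F has_derivative D) (at p)"
  shows "(\<Sum>k\<in>UNIV. c $ k * dx k F p) = D (c, 0)"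
    and "(\<Sum>k\<in>UNIV. c $ k * dxi k F p) = D (0, c)"
proof -
  have fd: "frechet_derivative F (at p) = D" using frechet_derivative_at[OF assms] by simp
  have l: "linear D" using assms has_derivative_linear by blast
  have e1: "(c, 0) = (\<Sum>k\<in>UNIV. c $ k *\<^sub>R (axis k 1, 0::real^'n))"
    using basis_expansion[of c] by (simp add: fst_sum snd_sum prod_eq_iff scalar_mult_eq_scaleR)
  have e2: "(0, c) = (\<Sum>k\<in>UNIV. c $ k *\<^sub>R (0::real^'n, axis k 1))"
    using basis_expansion[of c] by (simp add: fst_sum snd_sum prod_eq_iff scalar_mult_eq_scaleR)
  show "(\<Sum>k\<in>UNIV. c $ k * dx k F p) = D (c, 0)"
    unfolding e1 dx_def fd linear_sum[OF l] linear_scale[OF l] by simp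
  show "(\<Sum>k\<in>UNIV. c $ k * dxi k F p) = D (0, c)"
    unfolding e2 dxi_def fd linear_sum[OF l] linear_scale[OF l] by simp
qed



lemma diff_on_open:
  assumes "f differentiable_on U" "open U" "y \<in> U"
  shows "f differentiable (at y)"
proof -
  have "f differentiable (at y within U)" using assms(1,3) unfolding differentiable_on_def by blast
  moreover have "at y within U = at y" using at_within_open[OF assms(3,2)] .
  ultimately show ?thesis by simp
qed

lemma sm_diff:
  assumes "smooth_on U f" "open U" "q \<in> U"
  shows "(f has_derivative frechet_derivative f (at q)) (at q)"
proof -
  have "Ck_on (Suc 0) U f" using assms(1) unfolding smooth_on_def by blast
  then have "f differentiable_on U" by simp
  then have "f differentiable (at q)"
    using assms(2,3) diff_on_open by blast
  then show ?thesis using frechet_derivative_works by blast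
qed

lemma sm_partial:
  assumes "smooth_on U f" "b \<in> Basis"
  shows "smooth_on U (\<lambda>p. frechet_derivative f (at p) b)"
  unfolding smooth_on_def
proof
  fix k
  have "Ck_on (Suc k) U f" using assms(1) unfolding smooth_on_def by blast
  then show "Ck_on k U (\<lambda>p. frechet_derivative f (at p) b)" using assms(2) by simp
qed

lemma sm_dx:
  fixes f :: "'n::finite phase \<Rightarrow> real"
  assumes "smooth_on U f"
  shows "smooth_on U (dx i f)" "smooth_on U (dxi i f)"
proof -
  have "(axis i 1, 0::real^'n) \<in> (Basis :: 'n phase set)" "(0::real^'n, axis i 1) \<in> (Basis :: 'n phase set)"
    by (auto simp: Basis_prod_def)
  then show "smooth_on U (dx i f)" "smooth_on U (dxi i f)"
    using sm_partial[OF assms] unfolding dx_def[abs_def] dxi_def[abs_def] by auto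
qed

lemma sm_cont:
  assumes "smooth_on U f" shows "continuous_on U f"
proof -
  have "Ck_on 0 U f" using assms unfolding smooth_on_def by blast
  then show ?thesis by simp
qed

lemma Ck_cong:
  assumes "open U" "\<And>y. y \<in> U \<Longrightarrow> f y = g y" "Ck_on k U f"
  shows "Ck_on k U g"
  using assms
proof (induction k arbitrary: f g)
  case 0
  then show ?case using continuous_on_cong by fastforce
next
  case (Suc k)
  have fdo: "f differentiable_on U" using Suc.prems(3) by simp
  have "g differentiable (at y within U)" if y: "y \<in> U" for y
  proof -
    have "f differentiable (at y)" using fdo y Suc.prems(1) diff_on_open by blast
    then obtain D where "(f has_derivative D) (at y)" unfolding differentiable_def by blast
    then have "(g has_derivative D) (at y)"
      by (rule has_derivative_transform_within_open[OF _ Suc.prems(1) y]) (use Suc.prems(2) in auto)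
    then show ?thesis unfolding differentiable_def using has_derivative_at_withinI by blast
  qed
  then have "g differentiable_on U" unfolding differentiable_on_def by blast
  moreover have "Ck_on k U (\<lambda>p. frechet_derivative g (at p) b)" if "b \<in> Basis" for b
  proof -
    have a1: "Ck_on k U (\<lambda>p. frechet_derivative f (at p) b)" using Suc.prems that by simp
    have a2: "\<And>y. y \<in> U \<Longrightarrow> frechet_derivative f (at y) b = frechet_derivative g (at y) b"
      using fd_local[OF Suc.prems(1)] Suc.prems(2) by metis
    show ?thesis using Suc.IH[OF Suc.prems(1) a2 a1] .
  qed
  ultimately show ?case by simp
qed

lemma Ck_diff:
  assumes "open U" "Ck_on k U f" "Ck_on k U g"
  shows "Ck_on k U (\<lambda>p. f p - g p)"
  using assms
proof (induction k arbitrary: f g)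
  case 0
  then show ?case by (simp add: continuous_on_diff)
next
  case (Suc k)
  have df: "f differentiable_on U" and dg: "g differentiable_on U" using Suc.prems by auto
  have "(\<lambda>p. f p - g p) differentiable_on U" using df dg by (rule differentiable_on_diff)
  moreover have "Ck_on k U (\<lambda>p. frechet_derivative (\<lambda>p. f p - g p) (at p) b)" if b: "b \<in> Basis" for b
  proof -
    have a1: "Ck_on k U (\<lambda>p. frechet_derivative f (at p) b - frechet_derivative g (at p) b)"
      using Suc.IH[OF Suc.prems(1)] Suc.prems b by simp
    have a2: "frechet_derivative f (at y) b - frechet_derivative g (at y) b
        = frechet_derivative (\<lambda>p. f p - g p) (at y) b" if y: "y \<in> U" for y
    proof -
      have "f differentiable (at y)" "g differentiable (at y)"
        using df dg y Suc.prems(1) diff_on_open by blast+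
      then have "((\<lambda>p. f p - g p) has_derivative (\<lambda>h. frechet_derivative f (at y) h - frechet_derivative g (at y) h)) (at y)"
        by (intro has_derivative_diff) (auto simp: frechet_derivative_works[symmetric])
      from frechet_derivative_at[OF this] show ?thesis by metis
    qed
    show ?thesis using Ck_cong[OF Suc.prems(1) a2 a1] .
  qed
  ultimately show ?case by simp
qed

lemma sm_sub:
  assumes "open U" "smooth_on U f" "smooth_on U g"
  shows "smooth_on U (\<lambda>p. f p - g p)"
  using assms Ck_diff unfolding smooth_on_def by blast

lemma John_eq: "John i j f = (\<lambda>p. dx i (dxi j f) p - dx j (dxi i f) p)"
  by (simp add: John_def[abs_def])

lemma sm_John:
  fixes f :: "'n::finite phase \<Rightarrow> real"
  assumes "open U" "smooth_on U f"
  shows "smooth_on U (John i j f)"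
  unfolding John_eq by (intro sm_sub assms sm_dx)



lemma mvt_sq:
  fixes f :: "'a::real_normed_vector \<Rightarrow> real"
  assumes s: "s > 0"
    and df: "\<And>\<sigma> \<tau>. \<sigma> \<in> {0..s} \<Longrightarrow> \<tau> \<in> {0..s} \<Longrightarrow>
       (f has_derivative Df (q + \<sigma> *\<^sub>R u + \<tau> *\<^sub>R v)) (at (q + \<sigma> *\<^sub>R u + \<tau> *\<^sub>R v))"
    and du: "\<And>\<sigma> \<tau>. \<sigma> \<in> {0..s} \<Longrightarrow> \<tau> \<in> {0..s} \<Longrightarrow>
       ((\<lambda>z. Df z u) has_derivative Du (q + \<sigma> *\<^sub>R u + \<tau> *\<^sub>R v)) (at (q + \<sigma> *\<^sub>R u + \<tau> *\<^sub>R v))"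
  shows "\<exists>\<sigma> \<tau>. 0 < \<sigma> \<and> \<sigma> < s \<and> 0 < \<tau> \<and> \<tau> < s \<and>
     f (q + s *\<^sub>R u + s *\<^sub>R v) - f (q + s *\<^sub>R u) - f (q + s *\<^sub>R v) + f q
       = s * s * Du (q + \<sigma> *\<^sub>R u + \<tau> *\<^sub>R v) v"
proof -
  define k where "k \<sigma> = f (q + \<sigma> *\<^sub>R u + s *\<^sub>R v) - f (q + \<sigma> *\<^sub>R u + 0 *\<^sub>R v)" for \<sigma>
  have "DERIV k \<sigma> :> Df (q + \<sigma> *\<^sub>R u + s *\<^sub>R v) u - Df (q + \<sigma> *\<^sub>R u + 0 *\<^sub>R v) u"
    if "0 \<le> \<sigma>" "\<sigma> \<le> s" for \<sigma>
  proof -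
    have 1: "DERIV (\<lambda>\<sigma>. f ((q + s *\<^sub>R v) + \<sigma> *\<^sub>R u)) \<sigma> :> Df (q + \<sigma> *\<^sub>R u + s *\<^sub>R v) u"
      using line_deriv[of f "Df (q + \<sigma> *\<^sub>R u + s *\<^sub>R v)" "q + s *\<^sub>R v" \<sigma> u] df[of \<sigma> s] that s
      by (simp add: algebra_simps)
    have 2: "DERIV (\<lambda>\<sigma>. f ((q + 0 *\<^sub>R v) + \<sigma> *\<^sub>R u)) \<sigma> :> Df (q + \<sigma> *\<^sub>R u + 0 *\<^sub>R v) u"
      using line_deriv[of f "Df (q + \<sigma> *\<^sub>R u + 0 *\<^sub>R v)" "q + 0 *\<^sub>R v" \<sigma> u] df[of \<sigma> 0] that s
      by (simp add: algebra_simps)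
    show ?thesis unfolding k_def using DERIV_diff[OF 1 2] by (simp add: algebra_simps)
  qed
  from MVT2[OF s this] obtain \<sigma> where \<sigma>: "0 < \<sigma>" "\<sigma> < s"
    and k: "k s - k 0 = (s - 0) * (Df (q + \<sigma> *\<^sub>R u + s *\<^sub>R v) u - Df (q + \<sigma> *\<^sub>R u + 0 *\<^sub>R v) u)"
    by blast
  define l where "l \<tau> = Df (q + \<sigma> *\<^sub>R u + \<tau> *\<^sub>R v) u" for \<tau>
  have "DERIV l \<tau> :> Du (q + \<sigma> *\<^sub>R u + \<tau> *\<^sub>R v) v" if "0 \<le> \<tau>" "\<tau> \<le> s" for \<tau>
    using line_deriv[of "\<lambda>z. Df z u" "Du (q + \<sigma> *\<^sub>R u + \<tau> *\<^sub>R v)" "q + \<sigma> *\<^sub>R u" \<tau> v]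
      du[of \<sigma> \<tau>] that \<sigma> unfolding l_def by simp
  from MVT2[OF s this] obtain \<tau> where \<tau>: "0 < \<tau>" "\<tau> < s"
    and l: "l s - l 0 = (s - 0) * Du (q + \<sigma> *\<^sub>R u + \<tau> *\<^sub>R v) v"
    by blast
  have "f (q + s *\<^sub>R u + s *\<^sub>R v) - f (q + s *\<^sub>R u) - f (q + s *\<^sub>R v) + f q = k s - k 0"
    unfolding k_def by simp
  also have "\<dots> = s * (l s - l 0)" using k unfolding l_def by simp
  also have "\<dots> = s * s * Du (q + \<sigma> *\<^sub>R u + \<tau> *\<^sub>R v) v" using l by simp
  finally show ?thesis using \<sigma> \<tau> by blast
qed

lemma schwarz:
  fixes f :: "'a::real_normed_vector \<Rightarrow> real"
  assumes U: "open U" "q \<in> U"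
    and df: "\<And>y. y \<in> U \<Longrightarrow> (f has_derivative Df y) (at y)"
    and du: "\<And>y. y \<in> U \<Longrightarrow> ((\<lambda>z. Df z u) has_derivative Du y) (at y)"
    and dv: "\<And>y. y \<in> U \<Longrightarrow> ((\<lambda>z. Df z v) has_derivative Dv y) (at y)"
    and cu: "continuous_on U (\<lambda>y. Du y v)"
    and cv: "continuous_on U (\<lambda>y. Dv y u)"
  shows "Du q v = Dv q u"
proof (rule ccontr)
  assume ne: "Du q v \<noteq> Dv q u"
  define e where "e = \<bar>Du q v - Dv q u\<bar> / 3"
  have e: "e > 0" using ne by (simp add: e_def)
  obtain d0 where d0: "d0 > 0" "ball q d0 \<subseteq> U" using U open_contains_ball by blast
  have "isCont (\<lambda>y. Du y v) q" using cu U continuous_on_eq_continuous_at by blast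
  then obtain d1 where d1: "d1 > 0" "(\<lambda>y. Du y v) ` ball q d1 \<subseteq> ball (Du q v) e"
    using continuous_at_ball e by blast
  have "isCont (\<lambda>y. Dv y u) q" using cv U continuous_on_eq_continuous_at by blast
  then obtain d2 where d2: "d2 > 0" "(\<lambda>y. Dv y u) ` ball q d2 \<subseteq> ball (Dv q u) e"
    using continuous_at_ball e by blast
  define d where "d = min d0 (min d1 d2)"
  have d: "d > 0" using d0 d1 d2 by (simp add: d_def)
  define s where "s = d / (2 * (norm u + norm v + 1))"
  have pos: "0 < 2 * (norm u + norm v + 1)" by (smt (verit) norm_ge_zero)
  have s: "s > 0" unfolding s_def using d pos by simp
  have inball: "q + \<sigma> *\<^sub>R u + \<tau> *\<^sub>R v \<in> ball q d" if "\<sigma> \<in> {0..s}" "\<tau> \<in> {0..s}" for \<sigma> \<tau>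
  proof -
    have "norm (\<sigma> *\<^sub>R u + \<tau> *\<^sub>R v) \<le> \<sigma> * norm u + \<tau> * norm v"
      using that norm_triangle_ineq[of "\<sigma> *\<^sub>R u" "\<tau> *\<^sub>R v"] by auto
    also have "\<dots> \<le> s * norm u + s * norm v"
      using that by (intro add_mono mult_right_mono) auto
    also have "\<dots> < d"
    proof -
      have "s * (norm u + norm v) \<le> s * (norm u + norm v + 1)" using s by simp
      also have "\<dots> = d / 2" unfolding s_def using pos by (simp add: field_simps)
      finally show ?thesis using d by (simp add: algebra_simps)
    qed
    finally have "norm (\<sigma> *\<^sub>R u + \<tau> *\<^sub>R v) < d" .
    moreover have "norm (- (\<sigma> *\<^sub>R u) - \<tau> *\<^sub>R v) = norm (\<sigma> *\<^sub>R u + \<tau> *\<^sub>R v)"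
    proof -
      have "- (\<sigma> *\<^sub>R u) - \<tau> *\<^sub>R v = - (\<sigma> *\<^sub>R u + \<tau> *\<^sub>R v)" by (simp add: algebra_simps)
      then show ?thesis by (simp only: norm_minus_cancel)
    qed
    ultimately show ?thesis by (simp add: dist_norm add.assoc)
  qed
  have inU: "q + \<sigma> *\<^sub>R u + \<tau> *\<^sub>R v \<in> U" if "\<sigma> \<in> {0..s}" "\<tau> \<in> {0..s}" for \<sigma> \<tau>
    using inball[OF that] d0 unfolding d_def by auto
  obtain \<sigma>1 \<tau>1 where st1: "0 < \<sigma>1" "\<sigma>1 < s" "0 < \<tau>1" "\<tau>1 < s"
    and eq1: "f (q + s *\<^sub>R u + s *\<^sub>R v) - f (q + s *\<^sub>R u) - f (q + s *\<^sub>R v) + f q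
       = s * s * Du (q + \<sigma>1 *\<^sub>R u + \<tau>1 *\<^sub>R v) v"
    using mvt_sq[OF s, of f Df q u v Du] df du inU by blast
  have inU': "q + \<sigma> *\<^sub>R v + \<tau> *\<^sub>R u \<in> U" if "\<sigma> \<in> {0..s}" "\<tau> \<in> {0..s}" for \<sigma> \<tau>
    using inU[OF that(2,1)] by (simp add: algebra_simps)
  obtain \<sigma>2 \<tau>2 where st2: "0 < \<sigma>2" "\<sigma>2 < s" "0 < \<tau>2" "\<tau>2 < s"
    and eq2: "f (q + s *\<^sub>R v + s *\<^sub>R u) - f (q + s *\<^sub>R v) - f (q + s *\<^sub>R u) + f q
       = s * s * Dv (q + \<sigma>2 *\<^sub>R v + \<tau>2 *\<^sub>R u) u"
    using mvt_sq[OF s, of f Df q v u Dv] df dv inU' by blast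
  have "Du (q + \<sigma>1 *\<^sub>R u + \<tau>1 *\<^sub>R v) v = Dv (q + \<sigma>2 *\<^sub>R v + \<tau>2 *\<^sub>R u) u"
    using eq1 eq2 s by (simp add: algebra_simps)
  moreover have "q + \<sigma>1 *\<^sub>R u + \<tau>1 *\<^sub>R v \<in> ball q d1"
    using inball[of \<sigma>1 \<tau>1] st1 unfolding d_def by auto
  moreover have "q + \<tau>2 *\<^sub>R u + \<sigma>2 *\<^sub>R v \<in> ball q d2"
    using inball[of \<tau>2 \<sigma>2] st2 unfolding d_def by auto
  ultimately have "dist (Du q v) (Dv q u) < e + e"
    using d1(2) d2(2)
    by (smt (verit, ccfv_SIG) add.commute add.left_commute dist_commute dist_triangle_lt image_subset_iff mem_ball)
  moreover have aux: "\<And>x::real. x < x/3 + x/3 \<Longrightarrow> 0 < x/3 \<Longrightarrow> False" by linarith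
  ultimately show False using e unfolding e_def dist_real_def by blast
qed



definition homog :: "real \<Rightarrow> ('n::finite phase \<Rightarrow> real) \<Rightarrow> bool" where
  "homog lam f \<longleftrightarrow> (\<forall>x \<xi> c. \<xi> \<noteq> 0 \<longrightarrow> c > 0 \<longrightarrow> f (x, c *\<^sub>R \<xi>) = c powr lam * f (x, \<xi>))"

definition invar :: "('n::finite phase \<Rightarrow> real) \<Rightarrow> bool" where
  "invar f \<longleftrightarrow> (\<forall>x \<xi> \<tau>. \<xi> \<noteq> 0 \<longrightarrow> f (x + \<tau> *\<^sub>R \<xi>, \<xi>) = f (x, \<xi>))"

lemma smO:
  fixes f :: "'n::finite phase \<Rightarrow> real"
  assumes "smooth_on Om f" "q \<in> Om"
  shows "(f has_derivative frechet_derivative f (at q)) (at q)"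
  using sm_diff[OF assms(1) open_Om assms(2)] .

lemma TR:
  assumes L: "(L has_derivative L') (at q)" and U: "open U" "q \<in> U"
    and eq: "\<And>y. y \<in> U \<Longrightarrow> F y = G (L y)"
    and G: "(G has_derivative DG) (at (L q))"
  shows "frechet_derivative F (at q) = (\<lambda>w. DG (L' w))"
proof -
  have "((\<lambda>y. G (L y)) has_derivative (\<lambda>w. DG (L' w))) (at q)"
    using has_derivative_compose[OF L G] .
  then have "(F has_derivative (\<lambda>w. DG (L' w))) (at q)"
    by (rule has_derivative_transform_within_open[OF _ U]) (use eq in auto)
  then show ?thesis using frechet_derivative_at by metis
qed

lemma dx_fd: "dx k F p = frechet_derivative F (at p) (axis k 1, 0)"
  by (simp add: dx_def)
lemma dxi_fd: "dxi k F p = frechet_derivative F (at p) (0, axis k 1)"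
  by (simp add: dxi_def)

lemma hom_dx:
  fixes f :: "'n::finite phase \<Rightarrow> real"
  assumes sm: "smooth_on Om f" and h: "homog lam f"
  shows "homog lam (dx k f)" "homog (lam - 1) (dxi k f)"
proof -
  have main: "dx k f (x, c *\<^sub>R \<xi>) = c powr lam * dx k f (x, \<xi>) \<and>
     dxi k f (x, c *\<^sub>R \<xi>) = c powr (lam - 1) * dxi k f (x, \<xi>)"
    if xi: "\<xi> \<noteq> 0" and c: "c > 0" for x \<xi> and c :: real
  proof -
    define M where "M = (\<lambda>y::'n phase. (fst y, c *\<^sub>R snd y))"
    have hM: "\<And>q. (M has_derivative M) (at q)"
      unfolding M_def by (auto intro!: derivative_eq_intros)
    have q: "(x, \<xi>) \<in> Om" using xi by simp
    have Mq: "M (x, \<xi>) \<in> Om" using xi c by (simp add: M_def)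
    have eq: "f y = c powr (- lam) * f (M y)" if "y \<in> Om" for y
    proof -
      have "f (M y) = c powr lam * f y"
        using h that c unfolding homog_def M_def by (cases y) auto
      then show ?thesis using c by (simp add: powr_minus field_simps)
    qed
    have G: "((\<lambda>z. c powr (- lam) * f z) has_derivative
        (\<lambda>w. c powr (- lam) * frechet_derivative f (at (M (x, \<xi>))) w)) (at (M (x, \<xi>)))"
      by (auto intro!: derivative_eq_intros smO[OF sm Mq])
    have fd: "frechet_derivative f (at (x, \<xi>)) =
        (\<lambda>w. c powr (- lam) * frechet_derivative f (at (M (x, \<xi>))) (M w))"
      using TR[OF hM open_Om q eq G] by simp
    have lin: "linear (frechet_derivative f (at (M (x, \<xi>))))"
      using smO[OF sm Mq] has_derivative_linear by blast
    have 1: "dx k f (x, \<xi>) = c powr (- lam) * dx k f (x, c *\<^sub>R \<xi>)"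
      unfolding dx_fd fd by (simp add: M_def)
    have Meq: "M (0, axis k 1) = c *\<^sub>R (0, axis k 1)" by (simp add: M_def)
    have 2: "dxi k f (x, \<xi>) = c powr (- lam) * c * dxi k f (x, c *\<^sub>R \<xi>)"
      unfolding dxi_fd fd Meq linear_scale[OF lin] by (simp add: M_def)
    have cp: "c powr lam * c powr (- lam) = 1" using c by (simp add: powr_minus)
    have cp2: "c powr (lam - 1) * (c powr (- lam) * c) = 1"
      using c by (simp add: powr_diff powr_minus field_simps)
    show ?thesis using 1 2 cp cp2
      by (metis (no_types, lifting) mult.assoc mult_1)
  qed
  show "homog lam (dx k f)" "homog (lam - 1) (dxi k f)"
    unfolding homog_def using main by auto
qed

lemma inv_dx:
  fixes f :: "'n::finite phase \<Rightarrow> real"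
  assumes sm: "smooth_on Om f" and h: "invar f"
  shows "invar (dx k f)"
    "\<And>x \<xi> \<tau>. \<xi> \<noteq> 0 \<Longrightarrow> dxi k f (x + \<tau> *\<^sub>R \<xi>, \<xi>) = dxi k f (x, \<xi>) - \<tau> * dx k f (x, \<xi>)"
proof -
  have main: "dx k f (x, \<xi>) = dx k f (x + \<tau> *\<^sub>R \<xi>, \<xi>) \<and>
     dxi k f (x, \<xi>) = \<tau> * dx k f (x + \<tau> *\<^sub>R \<xi>, \<xi>) + dxi k f (x + \<tau> *\<^sub>R \<xi>, \<xi>)"
    if xi: "\<xi> \<noteq> 0" for x \<xi> and \<tau> :: real
  proof -
    define T where "T = (\<lambda>y::'n phase. (fst y + \<tau> *\<^sub>R snd y, snd y))"
    have hT: "\<And>q. (T has_derivative T) (at q)"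
      unfolding T_def by (auto intro!: derivative_eq_intros)
    have q: "(x, \<xi>) \<in> Om" using xi by simp
    have Tq: "T (x, \<xi>) \<in> Om" using xi by (simp add: T_def)
    have eq: "f y = f (T y)" if "y \<in> Om" for y
      using h that unfolding invar_def T_def by (cases y) auto
    have fd: "frechet_derivative f (at (x, \<xi>)) =
        (\<lambda>w. frechet_derivative f (at (T (x, \<xi>))) (T w))"
      using TR[OF hT open_Om q eq smO[OF sm Tq]] by simp
    have lin: "linear (frechet_derivative f (at (T (x, \<xi>))))"
      using smO[OF sm Tq] has_derivative_linear by blast
    have 1: "dx k f (x, \<xi>) = dx k f (x + \<tau> *\<^sub>R \<xi>, \<xi>)"
      unfolding dx_fd fd by (simp add: T_def)
    have Teq: "T (0, axis k 1) = \<tau> *\<^sub>R (axis k 1, 0) + (0, axis k 1)" by (simp add: T_def)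
    have 2: "dxi k f (x, \<xi>) = \<tau> * dx k f (x + \<tau> *\<^sub>R \<xi>, \<xi>) + dxi k f (x + \<tau> *\<^sub>R \<xi>, \<xi>)"
      unfolding dxi_fd dx_fd fd Teq linear_add[OF lin] linear_scale[OF lin] by (simp add: T_def)
    show ?thesis using 1 2 by simp
  qed
  show "invar (dx k f)" unfolding invar_def using main by auto
  show "dxi k f (x + \<tau> *\<^sub>R \<xi>, \<xi>) = dxi k f (x, \<xi>) - \<tau> * dx k f (x, \<xi>)"
    if xi: "\<xi> \<noteq> 0" for x \<xi> \<tau>
    using main[OF xi, of x \<tau>] by simp
qed

lemma schwarz_dx:
  fixes f :: "'n::finite phase \<Rightarrow> real"
  assumes sm: "smooth_on Om f" and q: "q \<in> Om"
  shows "dx i (dx j f) q = dx j (dx i f) q"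
proof -
  have a: "dx j f = (\<lambda>z. frechet_derivative f (at z) (axis j 1, 0))" for j
    by (simp add: dx_def[abs_def])
  have "frechet_derivative (dx j f) (at q) (axis i 1, 0) = frechet_derivative (dx i f) (at q) (axis j 1, 0)"
  proof (rule schwarz[OF open_Om q, of f "\<lambda>y. frechet_derivative f (at y)"])
    show "\<And>y. y \<in> Om \<Longrightarrow> (f has_derivative frechet_derivative f (at y)) (at y)"
      using smO[OF sm] by blast
    show "\<And>y. y \<in> Om \<Longrightarrow> ((\<lambda>z. frechet_derivative f (at z) (axis j 1, 0)) has_derivative
        frechet_derivative (dx j f) (at y)) (at y)"
      using smO[OF sm_dx(1)[OF sm]] by (simp add: a)
    show "\<And>y. y \<in> Om \<Longrightarrow> ((\<lambda>z. frechet_derivative f (at z) (axis i 1, 0)) has_derivative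
        frechet_derivative (dx i f) (at y)) (at y)"
      using smO[OF sm_dx(1)[OF sm]] by (simp add: a)
    show "continuous_on Om (\<lambda>y. frechet_derivative (dx j f) (at y) (axis i 1, 0))"
      using sm_cont[OF sm_dx(1)[OF sm_dx(1)[OF sm]]] by (simp add: dx_def[abs_def])
    show "continuous_on Om (\<lambda>y. frechet_derivative (dx i f) (at y) (axis j 1, 0))"
      using sm_cont[OF sm_dx(1)[OF sm_dx(1)[OF sm]]] by (simp add: dx_def[abs_def])
  qed
  then show ?thesis by (simp add: dx_def)
qed

lemma hom_John:
  fixes f :: "'n::finite phase \<Rightarrow> real"
  assumes sm: "smooth_on Om f" and h: "homog lam f"
  shows "homog (lam - 1) (John i j f)"
proof -
  have "homog (lam - 1) (dx i (dxi j f))" "homog (lam - 1) (dx j (dxi i f))"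
    using hom_dx(1)[OF sm_dx(2)[OF sm] hom_dx(2)[OF sm h]] by auto
  then show ?thesis unfolding homog_def John_def by (simp add: algebra_simps)
qed

lemma inv_John:
  fixes f :: "'n::finite phase \<Rightarrow> real"
  assumes sm: "smooth_on Om f" and h: "invar f"
  shows "invar (John i j f)"
proof -
  have key: "dx i (dxi j f) (x, \<xi>) = dx i (dxi j f) (x + \<tau> *\<^sub>R \<xi>, \<xi>) + \<tau> * dx i (dx j f) (x + \<tau> *\<^sub>R \<xi>, \<xi>)"
    if xi: "\<xi> \<noteq> 0" for x \<xi> \<tau> i j
  proof -
    define T where "T = (\<lambda>y::'n phase. (fst y + \<tau> *\<^sub>R snd y, snd y))"
    have hT: "\<And>q. (T has_derivative T) (at q)"
      unfolding T_def by (auto intro!: derivative_eq_intros)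
    have q: "(x, \<xi>) \<in> Om" using xi by simp
    have Tq: "T (x, \<xi>) \<in> Om" using xi by (simp add: T_def)
    define H where "H = (\<lambda>z. dxi j f z + \<tau> * dx j f z)"
    have eq: "dxi j f y = H (T y)" if yO: "y \<in> Om" for y
    proof -
      obtain a b where y: "y = (a, b)" "b \<noteq> 0" using yO by (cases y) auto
      show ?thesis using inv_dx[OF sm h] y unfolding H_def T_def invar_def by simp
    qed
    have G: "(H has_derivative (\<lambda>w. frechet_derivative (dxi j f) (at (T (x, \<xi>))) w
          + \<tau> * frechet_derivative (dx j f) (at (T (x, \<xi>))) w)) (at (T (x, \<xi>)))"
      unfolding H_def
      by (auto intro!: derivative_eq_intros smO[OF sm_dx(1)[OF sm] Tq] smO[OF sm_dx(2)[OF sm] Tq])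
    have fd: "frechet_derivative (dxi j f) (at (x, \<xi>)) = (\<lambda>w. frechet_derivative (dxi j f) (at (T (x, \<xi>))) (T w)
          + \<tau> * frechet_derivative (dx j f) (at (T (x, \<xi>))) (T w))"
      using TR[OF hT open_Om q eq G] by simp
    show ?thesis unfolding dx_fd[of i "dxi j f"] dx_fd[of i "dx j f"] fd by (simp add: T_def)
  qed
  show ?thesis unfolding invar_def John_def
  proof (intro allI impI)
    fix x \<xi> \<tau> assume xi: "(\<xi>::real^'n) \<noteq> 0"
    have "(x + \<tau> *\<^sub>R \<xi>, \<xi>) \<in> Om" using xi by simp
    then have s: "dx i (dx j f) (x + \<tau> *\<^sub>R \<xi>, \<xi>) = dx j (dx i f) (x + \<tau> *\<^sub>R \<xi>, \<xi>)"
      using schwarz_dx[OF sm] by blast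
    show "dx i (dxi j f) (x + \<tau> *\<^sub>R \<xi>, \<xi>) - dx j (dxi i f) (x + \<tau> *\<^sub>R \<xi>, \<xi>) =
          dx i (dxi j f) (x, \<xi>) - dx j (dxi i f) (x, \<xi>)"
      using key[OF xi, where ?x = x and ?\<tau> = \<tau> and ?i = i and ?j = j]
        key[OF xi, where ?x = x and ?\<tau> = \<tau> and ?i = j and ?j = i]
        arg_cong[OF s, of "\<lambda>t. \<tau> * t"] by linarith
  qed
qed



definition retr :: "'n::finite phase \<Rightarrow> 'n phase" where
  "retr q = (fst q - ((fst q \<bullet> snd q) / (snd q \<bullet> snd q)) *\<^sub>R snd q, (1 / norm (snd q)) *\<^sub>R snd q)"

lemma ext_retr: "ext g q = g (retr q)"
  by (simp add: ext_def retr_def)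

lemma TS_iff: "q \<in> TS \<longleftrightarrow> norm (snd q) = 1 \<and> fst q \<bullet> snd q = 0"
  by (cases q) (simp add: TS_def)

lemma TS_Om: "q \<in> TS \<Longrightarrow> q \<in> Om"
  by (cases q) (auto simp: TS_iff)

lemma retr_fix:
  assumes "norm \<xi> = 1" "x \<bullet> \<xi> = 0"
  shows "retr (x, \<xi>) = (x, \<xi>)"
  using assms by (simp add: retr_def)

lemma retr_TS:
  assumes "q \<in> Om" shows "retr q \<in> TS"
proof -
  obtain x \<xi> where q: "q = (x, \<xi>)" "\<xi> \<noteq> 0" using assms by (cases q) auto
  have n: "norm \<xi> > 0" using q by simp
  have ii: "\<xi> \<bullet> \<xi> = (norm \<xi>)\<^sup>2" by (simp add: power2_norm_eq_inner)
  have "norm ((1 / norm \<xi>) *\<^sub>R \<xi>) = 1" using n by simp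
  moreover have "(x - ((x \<bullet> \<xi>) / (\<xi> \<bullet> \<xi>)) *\<^sub>R \<xi>) \<bullet> ((1 / norm \<xi>) *\<^sub>R \<xi>) = 0"
    using n unfolding inner_diff_left inner_scaleR_left inner_scaleR_right ii
    by (simp add: field_simps power2_eq_square inner_commute)
  ultimately show ?thesis by (simp add: TS_iff retr_def q)
qed

lemma snd_diff: "snd differentiable (at (q::'a::real_normed_vector \<times> 'b::real_normed_vector))"
  by (rule bounded_linear_imp_differentiable[OF bounded_linear_snd])
lemma fst_diff: "fst differentiable (at (q::'a::real_normed_vector \<times> 'b::real_normed_vector))"
  by (rule bounded_linear_imp_differentiable[OF bounded_linear_fst])
lemma pair_diff: "f differentiable (at x) \<Longrightarrow> g differentiable (at x) \<Longrightarrow> (\<lambda>x. (f x, g x)) differentiable (at x)"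
  unfolding differentiable_def using has_derivative_Pair by blast
lemma inner_diff: "(\<lambda>q::'n::finite phase. fst q \<bullet> snd q) differentiable (at q)"
  unfolding differentiable_def by (rule exI, auto intro!: derivative_intros)
lemma norm_snd_diff: assumes "snd q \<noteq> (0::real^'n::finite)" shows "(\<lambda>q::'n phase. norm (snd q)) differentiable (at q)"
  using differentiable_chain_at[OF snd_diff[of q], of norm] assms by (simp add: o_def)
lemma ss_diff: "(\<lambda>q::'n::finite phase. snd q \<bullet> snd q) differentiable (at q)"
  unfolding differentiable_def by (rule exI, auto intro!: derivative_intros)
lemma retr_diff:
  assumes "q \<in> Om" shows "retr differentiable (at q)"
proof -
  have ne: "snd q \<noteq> 0" using assms by (cases q) auto
  then have ne2: "snd q \<bullet> snd q \<noteq> 0" by simp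
  show ?thesis unfolding retr_def
    using ne by (intro pair_diff differentiable_diff differentiable_scaleR differentiable_divide inner_diff ss_diff
       norm_snd_diff fst_diff snd_diff differentiable_const) auto
qed

lemma tX_local:
  fixes F G :: "'n::finite phase \<Rightarrow> real"
  assumes "open U" "p \<in> U" "\<And>y. y \<in> U \<Longrightarrow> F y = G y"
  shows "tX i F p = tX i G p" "tXi i F p = tXi i G p"
  using fd_local[OF assms] by (simp_all add: tX_def tXi_def dx_def dxi_def)

lemma Dop_local:
  fixes g1 g2 :: "'n::finite phase \<Rightarrow> real"
  assumes eq: "\<And>q. q \<in> TS \<Longrightarrow> g1 q = g2 q" and q: "q \<in> Om"
  shows "Dop I J l g1 q = Dop I J l g2 q"
proof -
  have e1: "ext g1 y = ext g2 y" if "y \<in> Om" for y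
    using eq retr_TS[OF that] by (simp add: ext_retr)
  have rX: "rX k g1 y = rX k g2 y" "rXi k g1 y = rXi k g2 y" if "y \<in> Om" for y k
    unfolding rX_def rXi_def using tX_local[OF open_Om that e1] by auto
  have e2: "ext (rXi k g1) y = ext (rXi k g2) y" if "y \<in> Om" for y k
    using rX(2) TS_Om[OF retr_TS[OF that]] by (simp add: ext_retr)
  have rXX: "rX k' (rXi k g1) y = rX k' (rXi k g2) y" if "y \<in> Om" for y k k'
    unfolding rX_def using tX_local[OF open_Om that e2] by auto
  show ?thesis unfolding Dop_def rJohn_def using rX(1)[OF q] rXX[OF q] by simp
qed

lemma tX_formula:
  fixes F :: "'n::finite phase \<Rightarrow> real"
  assumes "(F has_derivative D) (at p)"
  shows "tX i F p = D (axis i 1, 0) - snd p $ i * D (snd p, 0)"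
  using sum_dx(1)[OF assms, of "snd p"] frechet_derivative_at[OF assms]
  by (simp add: tX_def dx_def)

lemma tXi_formula:
  fixes F :: "'n::finite phase \<Rightarrow> real"
  assumes "(F has_derivative D) (at p)"
  shows "tXi i F p = D (0, axis i 1) - fst p $ i * D (snd p, 0) - snd p $ i * D (0, snd p)"
  using sum_dx[OF assms, of "snd p"] frechet_derivative_at[OF assms]
  by (simp add: tXi_def dx_def dxi_def)

lemma TL:
  fixes U :: "'n::finite phase \<Rightarrow> real"
  assumes p: "p \<in> TS" and dU: "(U has_derivative DU) (at p)"
  shows "tX i (ext U) p = tX i U p"
proof -
  obtain x \<xi> where pp: "p = (x, \<xi>)" "norm \<xi> = 1" "x \<bullet> \<xi> = 0" using p by (cases p) (auto simp: TS_iff)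
  have rp: "retr p = p" using retr_fix pp by simp
  have "(U \<circ> retr) differentiable (at p)"
    using differentiable_chain_at[OF retr_diff[OF TS_Om[OF p]]] dU rp
    unfolding differentiable_def by auto
  moreover have "U \<circ> retr = ext U" by (auto simp: ext_retr)
  ultimately obtain DE where dE: "(ext U has_derivative DE) (at p)"
    unfolding differentiable_def by auto
  define a where "a = axis i 1 - (\<xi> $ i) *\<^sub>R \<xi>"
  have a\<xi>: "(x + t *\<^sub>R a) \<bullet> \<xi> = 0" for t
  proof -
    have "\<xi> \<bullet> \<xi> = 1" using pp(2) by (simp add: power2_norm_eq_inner[symmetric])
    moreover have "(x + t *\<^sub>R a) \<bullet> \<xi> = x \<bullet> \<xi> + t * (axis i 1 \<bullet> \<xi> - \<xi> $ i * (\<xi> \<bullet> \<xi>))"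
      by (simp add: a_def inner_add_left inner_diff_left algebra_simps)
    moreover have "axis i 1 \<bullet> \<xi> = \<xi> $ i" by (simp add: inner_axis')
    ultimately show ?thesis using pp(3) by simp
  qed
  have line: "ext U (p + t *\<^sub>R (a, 0)) = U (p + t *\<^sub>R (a, 0))" for t
    using retr_fix[OF pp(2) a\<xi>[of t]] by (simp add: ext_retr pp)
  have "DE (a, 0) = DU (a, 0)" using line_eq2[OF dE dU line] .
  moreover have "DE (a, 0) = DE (axis i 1, 0) - \<xi> $ i * DE (\<xi>, 0)"
  proof -
    have e: "(a, 0::real^'n) = (axis i 1, 0) - (\<xi> $ i) *\<^sub>R (\<xi>, 0)" by (simp add: a_def)
    show ?thesis unfolding e linear_diff[OF has_derivative_linear[OF dE]] linear_scale[OF has_derivative_linear[OF dE]]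
      by simp
  qed
  moreover have "DU (a, 0) = DU (axis i 1, 0) - \<xi> $ i * DU (\<xi>, 0)"
  proof -
    have e: "(a, 0::real^'n) = (axis i 1, 0) - (\<xi> $ i) *\<^sub>R (\<xi>, 0)" by (simp add: a_def)
    show ?thesis unfolding e linear_diff[OF has_derivative_linear[OF dU]] linear_scale[OF has_derivative_linear[OF dU]]
      by simp
  qed
  ultimately show ?thesis using tX_formula[OF dE, of i] tX_formula[OF dU, of i] by (simp add: pp)
qed

lemma hh_deriv:
  fixes \<xi> :: "real^'n::finite"
  assumes "\<xi> \<noteq> 0"
  shows "((\<lambda>\<eta>. norm \<eta> powr (- lam)) has_derivative
           (\<lambda>w. - lam * norm \<xi> powr (- lam - 2) * (\<xi> \<bullet> w))) (at \<xi>)"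
proof -
  have n: "norm \<xi> > 0" using assms by simp
  have "((\<lambda>\<eta>. norm \<eta> powr (- lam)) has_derivative
       (\<lambda>h. norm \<xi> powr (- lam) * (0 * ln (norm \<xi>) + (h \<bullet> sgn \<xi>) * (- lam) / norm \<xi>))) (at \<xi>)"
    by (rule has_derivative_powr[OF has_derivative_norm[OF assms] has_derivative_const]) (use n in auto)
  moreover have "norm \<xi> powr (- lam) * (0 * ln (norm \<xi>) + (h \<bullet> sgn \<xi>) * (- lam) / norm \<xi>)
      = - lam * norm \<xi> powr (- lam - 2) * (\<xi> \<bullet> h)" for h
  proof -
    have "norm \<xi> powr (- lam - 2) = norm \<xi> powr (- lam) / (norm \<xi> * norm \<xi>)"
      using n by (simp add: powr_diff power2_eq_square)
    then show ?thesis using n by (simp add: sgn_div_norm inner_commute field_simps)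
  qed
  ultimately show ?thesis by simp
qed

lemma hj_diff:
  fixes \<xi> :: "real^'n::finite"
  assumes "\<xi> \<noteq> 0"
  shows "(\<lambda>\<eta>. - lam * norm \<eta> powr (- lam - 2) * \<eta> $ j) differentiable (at \<xi>)"
proof -
  have n: "norm \<xi> > 0" using assms by simp
  have "(\<lambda>\<eta>. norm \<eta> powr (- lam - 2)) differentiable (at \<xi>)"
    by (rule differentiableI[OF has_derivative_powr[OF has_derivative_norm[OF assms] has_derivative_const]]) (use n in auto)
  then show ?thesis
    by (intro differentiable_mult differentiable_const bounded_linear_imp_differentiable[OF bounded_linear_vec_nth])
qed



lemma snd_comp_deriv:
  assumes "(h has_derivative Dh) (at (snd q))"
  shows "((\<lambda>y. h (snd y)) has_derivative (\<lambda>w. Dh (snd w))) (at q)"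
  using has_derivative_compose[OF has_derivative_snd[OF has_derivative_ident] assms] .

lemma key:
  fixes f :: "'n::finite phase \<Rightarrow> real"
  assumes sm: "smooth_on Om f" and hf: "homog lam f" and iv: "invar f" and p: "p \<in> TS"
  shows "John i j f p = rJohn i j f p - (lam + 1) * (snd p $ i * rX j f p - snd p $ j * rX i f p)"
proof -
  obtain x \<xi> where pp: "p = (x, \<xi>)" "norm \<xi> = 1" "x \<bullet> \<xi> = 0" using p by (cases p) (auto simp: TS_iff)
  have pO: "p \<in> Om" using TS_Om[OF p] .
  define hh where "hh = (\<lambda>\<eta>::real^'n. norm \<eta> powr (- lam))"
  define g where "g = (\<lambda>q. hh (snd q) * f q)"
  define hj where "hj = (\<lambda>j (\<eta>::real^'n). - lam * norm \<eta> powr (- lam - 2) * \<eta> $ j)"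
  define G where "G = (\<lambda>j q. hj j (snd q) * f q + hh (snd q) * dxi j f q)"
  have ext_g: "ext f q = g q" if qO: "q \<in> Om" for q
  proof -
    obtain y \<eta> where q: "q = (y, \<eta>)" "\<eta> \<noteq> 0" using qO by (cases q) auto
    define n where "n = norm \<eta>"
    have n: "n > 0" using q by (simp add: n_def)
    define \<eta>' where "\<eta>' = (1 / n) *\<^sub>R \<eta>"
    have \<eta>': "\<eta>' \<noteq> 0" using q n by (simp add: \<eta>'_def)
    define \<tau> where "\<tau> = - (y \<bullet> \<eta>) / n"
    have ii: "\<eta> \<bullet> \<eta> = n * n" by (simp add: n_def power2_norm_eq_inner[symmetric] power2_eq_square)
    have 1: "y - ((y \<bullet> \<eta>) / (\<eta> \<bullet> \<eta>)) *\<^sub>R \<eta> = y + \<tau> *\<^sub>R \<eta>'"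
      using n unfolding ii \<tau>_def \<eta>'_def by (simp add: scaleR_scaleR field_simps)
    have 2: "n *\<^sub>R \<eta>' = \<eta>" using n by (simp add: \<eta>'_def)
    have "ext f q = f (y + \<tau> *\<^sub>R \<eta>', \<eta>')" by (simp add: ext_def q 1 n_def[symmetric] \<eta>'_def)
    also have "\<dots> = f (y, \<eta>')" using iv \<eta>' unfolding invar_def by blast
    also have "\<dots> = n powr (- lam) * f (y, \<eta>)"
    proof -
      have "f (y, n *\<^sub>R \<eta>') = n powr lam * f (y, \<eta>')" using hf \<eta>' n unfolding homog_def by blast
      then show ?thesis using n unfolding 2 by (simp add: powr_minus field_simps)
    qed
    finally show ?thesis by (simp add: g_def hh_def q n_def)
  qed
  have g_inv: "g (y + \<tau> *\<^sub>R \<eta>, \<eta>) = g (y, \<eta>)" if "\<eta> \<noteq> 0" for y \<eta> \<tau>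
    using iv that unfolding invar_def g_def by simp
  have g_hom: "g (y, c *\<^sub>R \<eta>) = g (y, \<eta>)" if "\<eta> \<noteq> 0" "c > 0" for y \<eta> c
  proof -
    have "f (y, c *\<^sub>R \<eta>) = c powr lam * f (y, \<eta>)" using hf that unfolding homog_def by blast
    moreover have "hh (c *\<^sub>R \<eta>) = c powr (- lam) * hh \<eta>" using that by (simp add: hh_def powr_mult)
    moreover have "c powr (- lam) * c powr lam = 1" using that by (simp add: powr_minus)
    ultimately show ?thesis unfolding g_def by (simp add: algebra_simps)
  qed
  have g_der: "(g has_derivative (\<lambda>w. hh (snd q) * frechet_derivative f (at q) w
      + (- lam * norm (snd q) powr (- lam - 2) * (snd q \<bullet> snd w)) * f q)) (at q)" if qO: "q \<in> Om" for q
  proof -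
    have ne: "snd q \<noteq> 0" using qO by (cases q) auto
    have H: "((\<lambda>y. hh (snd y)) has_derivative (\<lambda>w. - lam * norm (snd q) powr (- lam - 2) * (snd q \<bullet> snd w))) (at q)"
      using snd_comp_deriv[OF hh_deriv[OF ne, of lam]] unfolding hh_def .
    show ?thesis unfolding g_def using has_derivative_mult[OF H smO[OF sm qO]] .
  qed
  have fdg: "frechet_derivative g (at q) = (\<lambda>w. hh (snd q) * frechet_derivative f (at q) w
      + (- lam * norm (snd q) powr (- lam - 2) * (snd q \<bullet> snd w)) * f q)" if qO: "q \<in> Om" for q
    using frechet_derivative_at[OF g_der[OF qO]] by simp
  have gd: "(g has_derivative frechet_derivative g (at q)) (at q)" if qO: "q \<in> Om" for q
    using g_der[OF qO] fdg[OF qO] by simp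
  have Ag: "frechet_derivative g (at q) (snd q, 0) = 0" if qO: "q \<in> Om" for q
  proof (rule line_eq[OF gd[OF qO], of 1])
    fix t :: real
    obtain y \<eta> where q: "q = (y, \<eta>)" "\<eta> \<noteq> 0" using qO by (cases q) auto
    show "g (q + t *\<^sub>R (snd q, 0)) = g q + t * 0" using g_inv[OF q(2)] by (simp add: q)
  qed simp
  have Eg: "frechet_derivative g (at q) (0, snd q) = 0" if qO: "q \<in> Om" for q
  proof (rule line_eq[OF gd[OF qO], of 1])
    fix t :: real assume t: "\<bar>t\<bar> < 1"
    obtain y \<eta> where q: "q = (y, \<eta>)" "\<eta> \<noteq> 0" using qO by (cases q) auto
    have "q + t *\<^sub>R (0, snd q) = (y, (1 + t) *\<^sub>R \<eta>)" by (simp add: q algebra_simps)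
    then show "g (q + t *\<^sub>R (0, snd q)) = g q + t * 0" using g_hom[OF q(2), of "1 + t" y] t by (simp add: q)
  qed simp
  have dxig: "frechet_derivative g (at q) (0, axis j 1) = G j q" if qO: "q \<in> Om" for q j
    unfolding fdg[OF qO] G_def hj_def dxi_fd by (simp add: inner_axis algebra_simps)
  have tXig: "tXi j g q = G j q" if qO: "q \<in> Om" for q j
    using tXi_formula[OF gd[OF qO], of j] Ag[OF qO] Eg[OF qO] dxig[OF qO] by simp
  have rXif: "rXi j f q = G j q" if qO: "q \<in> Om" for q j
    unfolding rXi_def using tX_local(2)[OF open_Om qO ext_g] tXig[OF qO] by simp
  have Af: "frechet_derivative f (at q) (snd q, 0) = 0" if qO: "q \<in> Om" for q
  proof (rule line_eq[OF smO[OF sm qO], of 1])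
    fix t :: real
    obtain y \<eta> where q: "q = (y, \<eta>)" "\<eta> \<noteq> 0" using qO by (cases q) auto
    show "f (q + t *\<^sub>R (snd q, 0)) = f q + t * 0" using iv q(2) unfolding invar_def by (simp add: q)
  qed simp
  have P3: "frechet_derivative (dxi j f) (at q) (snd q, 0) = - dx j f q" if qO: "q \<in> Om" for q j
  proof (rule line_eq[OF smO[OF sm_dx(2)[OF sm] qO], of 1])
    fix t :: real
    obtain y \<eta> where q: "q = (y, \<eta>)" "\<eta> \<noteq> 0" using qO by (cases q) auto
    show "dxi j f (q + t *\<^sub>R (snd q, 0)) = dxi j f q + t * - dx j f q"
      using inv_dx(2)[OF sm iv q(2), of j y t] by (simp add: q)
  qed simp
  have G_der: "\<exists>DG. (G j has_derivative DG) (at q) \<and> (\<forall>a. DG (a, 0) =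
      hj j (snd q) * frechet_derivative f (at q) (a, 0) + hh (snd q) * frechet_derivative (dxi j f) (at q) (a, 0))"
    if qO: "q \<in> Om" for q j
  proof -
    have ne: "snd q \<noteq> 0" using qO by (cases q) auto
    obtain Dhj where Dhj: "(hj j has_derivative Dhj) (at (snd q))"
      using hj_diff[OF ne, of lam j] unfolding differentiable_def hj_def by blast
    have Dhh: "(hh has_derivative (\<lambda>w. - lam * norm (snd q) powr (- lam - 2) * (snd q \<bullet> w))) (at (snd q))"
      using hh_deriv[OF ne, of lam] unfolding hh_def .
    have lj: "linear Dhj" using Dhj has_derivative_linear by blast
    have "(G j has_derivative (\<lambda>w. (hj j (snd q) * frechet_derivative f (at q) w + Dhj (snd w) * f q)
        + (hh (snd q) * frechet_derivative (dxi j f) (at q) w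
           + (- lam * norm (snd q) powr (- lam - 2) * (snd q \<bullet> snd w)) * dxi j f q))) (at q)"
      unfolding G_def
      by (intro has_derivative_add has_derivative_mult snd_comp_deriv[OF Dhj] snd_comp_deriv[OF Dhh]
          smO[OF sm qO] smO[OF sm_dx(2)[OF sm] qO])
    moreover have "Dhj 0 = 0" using linear_0[OF lj] .
    ultimately show ?thesis by (intro exI[of _ "\<lambda>w. (hj j (snd q) * frechet_derivative f (at q) w + Dhj (snd w) * f q)
        + (hh (snd q) * frechet_derivative (dxi j f) (at q) w
           + (- lam * norm (snd q) powr (- lam - 2) * (snd q \<bullet> snd w)) * dxi j f q)"]) auto
  qed
  have hhp: "hh \<xi> = 1" using pp by (simp add: hh_def)
  have hjp: "hj j \<xi> = - lam * \<xi> $ j" for j using pp by (simp add: hj_def)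
  have rXf: "rX j f p = dx j f p" for j
  proof -
    have "rX j f p = tX j g p" unfolding rX_def using tX_local(1)[OF open_Om pO ext_g] .
    also have "\<dots> = dx j f p"
      using tX_formula[OF gd[OF pO], of j] Ag[OF pO] fdg[OF pO] hhp by (simp add: pp dx_fd)
    finally show ?thesis .
  qed
  have rXX: "rX i (rXi j f) p = - lam * \<xi> $ j * dx i f p + dx i (dxi j f) p + \<xi> $ i * dx j f p" for i j
  proof -
    obtain DG where DG: "(G j has_derivative DG) (at p)" and DGa: "\<And>a. DG (a, 0) =
      hj j (snd p) * frechet_derivative f (at p) (a, 0) + hh (snd p) * frechet_derivative (dxi j f) (at p) (a, 0)"
      using G_der[OF pO, of j] by blast
    have DU: "(rXi j f has_derivative DG) (at p)"
      by (rule has_derivative_transform_within_open[OF DG open_Om pO]) (simp add: rXif)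
    have "rX i (rXi j f) p = tX i (rXi j f) p" unfolding rX_def using TL[OF p DU] .
    also have "\<dots> = tX i (G j) p" using tX_local(1)[OF open_Om pO rXif] .
    also have "\<dots> = DG (axis i 1, 0) - \<xi> $ i * DG (\<xi>, 0)" using tX_formula[OF DG] by (simp add: pp)
    also have "\<dots> = - lam * \<xi> $ j * dx i f p + dx i (dxi j f) p + \<xi> $ i * dx j f p"
      using DGa[of "axis i 1"] DGa[of \<xi>] Af[OF pO] P3[OF pO, of j] hhp hjp
      by (simp add: pp dx_fd algebra_simps)
    finally show ?thesis .
  qed
  show ?thesis
    unfolding rJohn_def John_def rXX rXf by (simp add: pp algebra_simps)
qed



lemma main_ind:
  fixes \<psi> :: "'n::finite phase \<Rightarrow> real" and I J :: "nat \<Rightarrow> 'n"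
  assumes sm: "smooth_on Om \<psi>" and hm: "homog (real m - 1) \<psi>" and iv: "invar \<psi>"
  shows "d \<le> m + 1 \<Longrightarrow>
    smooth_on Om (foldr (\<lambda>l f. John (I l) (J l) f) [m + 2 - d..<m+2] \<psi>) \<and>
    homog (real (m + 2 - d) - 3) (foldr (\<lambda>l f. John (I l) (J l) f) [m + 2 - d..<m+2] \<psi>) \<and>
    invar (foldr (\<lambda>l f. John (I l) (J l) f) [m + 2 - d..<m+2] \<psi>) \<and>
    (\<forall>p\<in>TS. foldr (\<lambda>l f. John (I l) (J l) f) [m + 2 - d..<m+2] \<psi> p
       = foldr (\<lambda>l g. Dop I J l g) [m + 2 - d..<m+2] \<psi> p)"
proof (induction d)
  case 0
  have "real (m + 2) - 3 = real m - 1" by simp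
  then show ?case using sm hm iv by simp
next
  case (Suc e)
  define a where "a = m + 2 - Suc e"
  have a1: "1 \<le> a" "a < m + 2" using Suc.prems by (auto simp: a_def)
  have ae: "Suc a = m + 2 - e" using Suc.prems by (simp add: a_def)
  have up: "[a..<m+2] = a # [Suc a..<m+2]" using a1 upt_conv_Cons by blast
  define F' where "F' = foldr (\<lambda>l f. John (I l) (J l) f) [Suc a..<m+2] \<psi>"
  define G' where "G' = foldr (\<lambda>l g. Dop I J l g) [Suc a..<m+2] \<psi>"
  have IH: "smooth_on Om F'" "homog (real a - 2) F'" "invar F'" "\<And>p. p \<in> TS \<Longrightarrow> F' p = G' p"
  proof -
    have h: "real (m + 2 - e) - 3 = real a - 2" using ae by (simp add: ae[symmetric])
    show "smooth_on Om F'" "homog (real a - 2) F'" "invar F'" "\<And>p. p \<in> TS \<Longrightarrow> F' p = G' p"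
      using Suc.IH Suc.prems unfolding F'_def G'_def ae h by auto
  qed
  have F: "foldr (\<lambda>l f. John (I l) (J l) f) [a..<m+2] \<psi> = John (I a) (J a) F'"
    unfolding up F'_def by simp
  have Gd: "foldr (\<lambda>l g. Dop I J l g) [a..<m+2] \<psi> = Dop I J a G'"
    unfolding up G'_def by simp
  have s: "smooth_on Om (John (I a) (J a) F')" using sm_John[OF open_Om IH(1)] .
  have h: "homog (real a - 3) (John (I a) (J a) F')"
    using hom_John[OF IH(1,2), of "I a" "J a"] by (simp add: algebra_simps)
  have i: "invar (John (I a) (J a) F')" using inv_John[OF IH(1,3)] .
  have e: "John (I a) (J a) F' p = Dop I J a G' p" if p: "p \<in> TS" for p
  proof -
    have "John (I a) (J a) F' p = Dop I J a F' p"
      using key[OF IH(1,2,3) p, of "I a" "J a"] unfolding Dop_def by (simp add: algebra_simps)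
    also have "\<dots> = Dop I J a G' p" using Dop_local[OF IH(4) TS_Om[OF p]] .
    finally show ?thesis .
  qed
  show ?case unfolding a_def[symmetric] F Gd using s h i e by auto
qed

theorem corollary3p1:
  fixes \<psi> :: "(real^'n::finite) \<times> (real^'n) \<Rightarrow> real" and m :: nat
    and I J :: "nat \<Rightarrow> 'n"
  assumes smooth: "smooth_on (UNIV \<times> (UNIV - {0})) \<psi>"
    and homog: "\<And>x \<xi> c. \<xi> \<noteq> 0 \<Longrightarrow> c > 0 \<Longrightarrow>
                   \<psi> (x, c *\<^sub>R \<xi>) = c powr (real m - 1) * \<psi> (x, \<xi>)"
    and invar: "\<And>x \<xi> \<tau>. \<xi> \<noteq> 0 \<Longrightarrow> \<psi> (x + \<tau> *\<^sub>R \<xi>, \<xi>) = \<psi> (x, \<xi>)"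
  shows "\<forall>p\<in>TS. foldr (\<lambda>l f. John (I l) (J l) f) [1..<m+2] \<psi> p
                = foldr (\<lambda>l g. Dop I J l g) [1..<m+2] \<psi> p"
proof -
  have hm: "homog (real m - 1) \<psi>" using homog unfolding homog_def by blast
  have iv: "invar \<psi>" using invar unfolding invar_def by blast
  have "m + 2 - (m + 1) = 1" by simp
  then show ?thesis using main_ind[OF smooth hm iv, of "m + 1" I J] by simp
qed

end
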